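(* Let $n\in\mathbb{N}$, $r\in\mathbb{N}_0$, and let $u(x,t_r)$ be smooth on $\mathbb{R}^2$. Let $F_n,H_n$ (degree $n$ in $z$, leading coefficient $1$), $G_{n-1}$ (degree $\le n-1$), $\tilde F_r,\tilde H_r$ (degree $r$), $\tilde G_{r-1}$ (degree $\le r-1$, $\tilde G_{-1}=0$) be polynomials in $z$ with coefficients smooth in $(x,t_r)$, satisfying for all $z\in\mathbb{C}$: $F_{n,x}=-iu_xF_n-2izG_{n-1}$, $H_{n,x}=iu_xH_n+2izG_{n-1}$, $G_{n-1,x}=i(H_n-F_n)$, $u_{xt_r}=-2i\tilde G_{r-1,x}-2(\tilde H_r-\tilde F_r)$, $\tilde F_{r,x}=-iu_x\tilde F_r-2iz\tilde G_{r-1}$, $\tilde H_{r,x}=iu_x\tilde H_r+2iz\tilde G_{r-1}$, and $z^2G_{n-1}^2+zF_nH_n=R_{2n+1}(z)=\prod_{m=0}^{2n}(z-E_m)$ independent of $(x,t_r)$, with $E_0=0$, $E_m\neq0$ for $m=1,\dots,2n$. On the curve $\mathcal{K}_n:y^2=R_{2n+1}(z)$ (compactified by $P_\infty$) define for $P=(z,y)\neq P_\infty$ $$\phi(P,x,t_r)=\frac{y-zG_{n-1}(z,x,t_r)}{F_n(z,x,t_r)}=\frac{zH_n(z,x,t_r)}{y+zG_{n-1}(z,x,t_r)}.$$ Then for $P=(z,y)\in\mathcal{K}_n\setminus\{P_\infty\}$, $(x,t_r)\in\mathbb{R}^2$: $\phi^2-i\phi_x=z+u_x\phi$; $\phi_{t_r}=\tilde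 F_r-\tilde H_r+\frac iz(\phi\tilde F_r)_x$; $\phi(P)+\phi(P^* )=-2zG_{n-1}/F_n$; $\phi(P)\phi(P^* )=-zH_n/F_n$; $\phi(P)-\phi(P^* )=2y(P)/F_n$, where $P^*=(z,-y)$.
   Context: $y(P)$ is the meromorphic function on $\mathcal{K}_n$ with $y^2=R_{2n+1}(z)$; $P^*=(z,-y)$ is the sheet-exchange involution. *)

theory Defs
  imports "HOL-Analysis.Analysis" "HOL-Computational_Algebra.Polynomial"
begin

fun Ck_on_UNIV :: "nat \<Rightarrow> ('a::real_normed_vector \<Rightarrow> 'b::real_normed_vector) \<Rightarrow> bool" where
  "Ck_on_UNIV 0 f = continuous_on UNIV f"
| "Ck_on_UNIV (Suc k) f =
     (\<exists>f'. (\<forall>p. (f has_derivative f' p) (at p)) \<and> (\<forall>v. Ck_on_UNIV k (\<lambda>p. f' p v)))"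

definition smooth_UNIV :: "('a::real_normed_vector \<Rightarrow> 'b::real_normed_vector) \<Rightarrow> bool" where
  "smooth_UNIV f \<longleftrightarrow> (\<forall>k. Ck_on_UNIV k f)"

definition smooth_poly_family :: "(real \<Rightarrow> real \<Rightarrow> complex poly) \<Rightarrow> bool" where
  "smooth_poly_family F \<longleftrightarrow> (\<forall>k. smooth_UNIV (\<lambda>(x,t). coeff (F x t) k))"

definition Rpoly :: "nat \<Rightarrow> (nat \<Rightarrow> complex) \<Rightarrow> complex \<Rightarrow> complex" where
  "Rpoly n E z = (\<Prod>m=0..2*n. (z - E m))"

definition phi ::
  "(real \<Rightarrow> real \<Rightarrow> complex poly) \<Rightarrow> (real \<Rightarrow> real \<Rightarrow> complex poly) \<Rightarrow> (real \<Rightarrow> real \<Rightarrow> complex poly)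
   \<Rightarrow> complex \<Rightarrow> complex \<Rightarrow> real \<Rightarrow> real \<Rightarrow> complex" where
  "phi F G H z y x t =
     (if poly (F x t) z \<noteq> 0 then (y - z * poly (G x t) z) / poly (F x t) z
      else z * poly (H x t) z / (y + z * poly (G x t) z))"

end

theory Submission
  imports Defs
begin

lemma partial_x:
  fixes f :: "real \<times> real \<Rightarrow> 'b::real_normed_vector"
  assumes "(f has_derivative D) (at (x,t))"
  shows "((\<lambda>s. f (s,t)) has_vector_derivative D (1,0)) (at x)"
proof -
  have "((\<lambda>s. (s,t)) has_derivative (\<lambda>h. (h,0))) (at x)"
    by (intro has_derivative_Pair has_derivative_ident has_derivative_const)
  from has_derivative_compose[OF this assms]
  have 1: "((\<lambda>s. f (s,t)) has_derivative (\<lambda>h. D (h,0))) (at x)" .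
  have lin: "linear D" using assms has_derivative_linear by blast
  have e: "D (h,0) = h *\<^sub>R D (1,0)" for h
    using linear_scale[OF lin, of h "(1,0)"] by simp
  have fe: "(\<lambda>h. D (h,0)) = (\<lambda>h. h *\<^sub>R D (1,0))"
    by (intro ext e)
  from 1 show ?thesis unfolding has_vector_derivative_def fe .
qed

lemma partial_t:
  fixes f :: "real \<times> real \<Rightarrow> 'b::real_normed_vector"
  assumes "(f has_derivative D) (at (x,t))"
  shows "((\<lambda>s. f (x,s)) has_vector_derivative D (0,1)) (at t)"
proof -
  have "((\<lambda>s. (x,s)) has_derivative (\<lambda>h. (0,h))) (at t)"
    by (intro has_derivative_Pair has_derivative_ident has_derivative_const)
  from has_derivative_compose[OF this assms]
  have 1: "((\<lambda>s. f (x,s)) has_derivative (\<lambda>h. D (0,h))) (at t)" .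
  have lin: "linear D" using assms has_derivative_linear by blast
  have e: "D (0,h) = h *\<^sub>R D (0,1)" for h
    using linear_scale[OF lin, of h "(0,1)"] by simp
  have fe: "(\<lambda>h. D (0,h)) = (\<lambda>h. h *\<^sub>R D (0,1))"
    by (intro ext e)
  from 1 show ?thesis unfolding has_vector_derivative_def fe .
qed

lemma mvtb:
  fixes g :: "real \<Rightarrow> 'b::real_normed_vector"
  assumes ab: "a \<le> b"
    and d: "\<And>s. s \<in> {a..b} \<Longrightarrow> (g has_vector_derivative g' s) (at s)"
    and bd: "\<And>s. s \<in> {a..b} \<Longrightarrow> norm (g' s - L) \<le> e"
  shows "norm (g b - g a - (b - a) *\<^sub>R L) \<le> 3 * e * (b - a)"
proof -
  have aS: "a \<in> {a..b}" using ab by simp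
  have B: "norm (g' s - g' a) \<le> 2 * e" if "s \<in> {a..b}" for s
  proof -
    have "norm (g' s - g' a) \<le> norm (g' s - L) + norm (g' a - L)"
      by (metis norm_minus_commute diff_add_cancel diff_diff_eq2 norm_triangle_sub)
    then show ?thesis using bd[OF that] bd[OF aS] by simp
  qed
  have 1: "norm (g b - g a - (b - a) *\<^sub>R g' a) \<le> norm (b - a) * (2 * e)"
    apply (rule vector_differentiable_bound_linearization[of "{a..b}" g g' a b a])
    using d has_vector_derivative_at_within apply blast
    using ab closed_segment_eq_real_ivl apply auto[1]
    using B apply blast
    using aS .
  have 2: "norm ((b - a) *\<^sub>R (g' a - L)) \<le> (b - a) * e"
    using bd[OF aS] ab by (simp add: mult_left_mono)
  have "g b - g a - (b - a) *\<^sub>R L = (g b - g a - (b - a) *\<^sub>R g' a) + (b - a) *\<^sub>R (g' a - L)"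
    by (simp add: scaleR_diff_right)
  then have "norm (g b - g a - (b - a) *\<^sub>R L) \<le> norm (b - a) * (2 * e) + (b - a) * e"
  proof -
    have "norm (g b - g a - (b - a) *\<^sub>R L) \<le> norm (g b - g a - (b - a) *\<^sub>R g' a) + norm ((b - a) *\<^sub>R (g' a - L))"
      unfolding \<open>g b - g a - (b - a) *\<^sub>R L = _\<close> by (rule norm_triangle_ineq)
    then show ?thesis using 1 2 by linarith
  qed
  moreover have "norm (b - a) = b - a" using ab by simp
  moreover have "(b - a) * (2 * e) + (b - a) * e = 3 * e * (b - a)" by (simp add: algebra_simps)
  ultimately show ?thesis by simp
qed

lemma schwarz:
  fixes f :: "real \<times> real \<Rightarrow> 'b::real_normed_vector"
  assumes d1: "\<And>p. (f has_derivative f' p) (at p)"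
   and d2x: "\<And>p. ((\<lambda>p. f' p (1,0)) has_derivative g1 p) (at p)"
   and d2t: "\<And>p. ((\<lambda>p. f' p (0,1)) has_derivative g2 p) (at p)"
   and c1: "continuous_on UNIV (\<lambda>p. g1 p (0,1))"
   and c2: "continuous_on UNIV (\<lambda>p. g2 p (1,0))"
  shows "g1 (x,t) (0,1) = g2 (x,t) (1,0)"
proof (rule ccontr)
  define P where "P = g2 (x,t) (1,0)"
  define Q where "Q = g1 (x,t) (0,1)"
  assume "Q \<noteq> P"
  define \<epsilon> where "\<epsilon> = norm (P - Q) / 19"
  have epos: "\<epsilon> > 0" using \<open>Q \<noteq> P\<close> by (simp add: \<epsilon>_def)
  have cc1: "continuous (at (x,t)) (\<lambda>p. g1 p (0,1))" using c1 by (simp add: continuous_on_eq_continuous_at)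
  have cc2: "continuous (at (x,t)) (\<lambda>p. g2 p (1,0))" using c2 by (simp add: continuous_on_eq_continuous_at)
  obtain \<delta>1 where d1p: "\<delta>1 > 0" and hd1: "\<And>p. dist p (x,t) < \<delta>1 \<Longrightarrow> dist (g1 p (0,1)) Q < \<epsilon>"
    using cc1 epos unfolding continuous_at_eps_delta Q_def by blast
  obtain \<delta>2 where d2p: "\<delta>2 > 0" and hd2: "\<And>p. dist p (x,t) < \<delta>2 \<Longrightarrow> dist (g2 p (1,0)) P < \<epsilon>"
    using cc2 epos unfolding continuous_at_eps_delta P_def by blast
  define h where "h = min \<delta>1 \<delta>2 / 4"
  have hpos: "h > 0" using d1p d2p by (simp add: h_def)
  have box: "dist (s,\<tau>) (x,t) < min \<delta>1 \<delta>2" if "s \<in> {x..x+h}" "\<tau> \<in> {t..t+h}" for s \<tau>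
  proof -
    have "dist (s,\<tau>) (x,t) = sqrt ((dist s x)\<^sup>2 + (dist \<tau> t)\<^sup>2)" by (simp add: dist_Pair_Pair)
    also have "\<dots> \<le> dist s x + dist \<tau> t" by (rule sqrt_sum_squares_le_sum_abs[THEN order_trans]) simp
    also have "\<dots> \<le> 2 * h" using that by (simp add: dist_real_def)
    also have "\<dots> < min \<delta>1 \<delta>2" using d1p d2p unfolding h_def by linarith
    finally show ?thesis .
  qed
  have B1: "norm (g1 (s,\<tau>) (0,1) - Q) \<le> \<epsilon>" "norm (g2 (s,\<tau>) (1,0) - P) \<le> \<epsilon>"
    if "s \<in> {x..x+h}" "\<tau> \<in> {t..t+h}" for s \<tau>
    using hd1[of "(s,\<tau>)"] hd2[of "(s,\<tau>)"] box[OF that] by (auto simp: dist_norm)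
  have st1: "norm (f' (x+h,\<tau>) (0,1) - f' (x,\<tau>) (0,1) - h *\<^sub>R P) \<le> 3 * \<epsilon> * h"
    if "\<tau> \<in> {t..t+h}" for \<tau>
    using mvtb[of x "x+h" "\<lambda>s. f' (s,\<tau>) (0,1)" "\<lambda>s. g2 (s,\<tau>) (1,0)" P \<epsilon>] hpos
      partial_x[OF d2t] B1(2)[OF _ that] by auto
  have dd1: "((\<lambda>\<tau>. f (x+h,\<tau>) - f (x,\<tau>)) has_vector_derivative (f' (x+h,s) (0,1) - f' (x,s) (0,1))) (at s)" for s
    by (intro has_vector_derivative_diff partial_t[OF d1])
  have dd2: "((\<lambda>s. f (s,t+h) - f (s,t)) has_vector_derivative (f' (s,t+h) (1,0) - f' (s,t) (1,0))) (at s)" for s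
    by (intro has_vector_derivative_diff partial_x[OF d1])
  have st2: "norm ((f (x+h,t+h) - f (x,t+h)) - (f (x+h,t) - f (x,t)) - h *\<^sub>R (h *\<^sub>R P)) \<le> 3 * (3 * \<epsilon> * h) * h"
    using mvtb[of t "t+h" "\<lambda>\<tau>. f (x+h,\<tau>) - f (x,\<tau>)" "\<lambda>\<tau>. f' (x+h,\<tau>) (0,1) - f' (x,\<tau>) (0,1)"
       "h *\<^sub>R P" "3 * \<epsilon> * h"] hpos
      st1 dd1 by auto
  have st3: "norm (f' (s,t+h) (1,0) - f' (s,t) (1,0) - h *\<^sub>R Q) \<le> 3 * \<epsilon> * h"
    if "s \<in> {x..x+h}" for s
    using mvtb[of t "t+h" "\<lambda>\<tau>. f' (s,\<tau>) (1,0)" "\<lambda>\<tau>. g1 (s,\<tau>) (0,1)" Q \<epsilon>] hpos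
      partial_t[OF d2x] B1(1)[OF that] by auto
  have st4: "norm ((f (x+h,t+h) - f (x+h,t)) - (f (x,t+h) - f (x,t)) - h *\<^sub>R (h *\<^sub>R Q)) \<le> 3 * (3 * \<epsilon> * h) * h"
    using mvtb[of x "x+h" "\<lambda>s. f (s,t+h) - f (s,t)" "\<lambda>s. f' (s,t+h) (1,0) - f' (s,t) (1,0)"
       "h *\<^sub>R Q" "3 * \<epsilon> * h"] hpos
      st3 dd2 by auto
  define \<Delta> where "\<Delta> = (f (x+h,t+h) - f (x,t+h)) - (f (x+h,t) - f (x,t))"
  have e4: "(f (x+h,t+h) - f (x+h,t)) - (f (x,t+h) - f (x,t)) = \<Delta>" by (simp add: \<Delta>_def algebra_simps)
  have "(h*h) *\<^sub>R (P - Q) = (\<Delta> - h *\<^sub>R (h *\<^sub>R Q)) - (\<Delta> - h *\<^sub>R (h *\<^sub>R P))"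
    by (simp add: algebra_simps)
  then have "norm ((h*h) *\<^sub>R (P - Q)) \<le> norm (\<Delta> - h *\<^sub>R (h *\<^sub>R Q)) + norm (\<Delta> - h *\<^sub>R (h *\<^sub>R P))"
    by (metis norm_triangle_ineq4)
  also have "\<dots> \<le> 18 * \<epsilon> * (h * h)"
    using st2 st4 unfolding \<Delta>_def[symmetric] e4 by (simp add: algebra_simps)
  finally have "norm ((h*h) *\<^sub>R (P - Q)) \<le> 18 * \<epsilon> * (h * h)" .
  moreover have "norm ((h*h) *\<^sub>R (P - Q)) = (h*h) * norm (P - Q)" using hpos by simp
  ultimately have "(h*h) * norm (P - Q) \<le> (h*h) * (18 * \<epsilon>)" by (simp add: algebra_simps)
  then have "norm (P - Q) \<le> 18 * \<epsilon>" using hpos by (simp add: mult_le_cancel_left_pos)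
  then show False using epos by (simp add: \<epsilon>_def)
qed

lemma smooth_mixed:
  fixes f :: "real \<times> real \<Rightarrow> 'b::real_normed_vector"
  assumes "smooth_UNIV f"
  obtains fx ft where "\<And>x t. ((\<lambda>s. f (s,t)) has_vector_derivative fx x t) (at x)"
    "\<And>x t. ((\<lambda>\<tau>. f (x,\<tau>)) has_vector_derivative ft x t) (at t)"
    "\<And>x t. \<exists>m. ((\<lambda>s. ft s t) has_vector_derivative m) (at x) \<and> ((\<lambda>\<tau>. fx x \<tau>) has_vector_derivative m) (at t)"
proof -
  have "Ck_on_UNIV (Suc (Suc 0)) f" using assms unfolding smooth_UNIV_def by blast
  then obtain f' where d1: "\<And>p. (f has_derivative f' p) (at p)"
    and c: "\<And>v. \<exists>f''. (\<forall>p. ((\<lambda>p. f' p v) has_derivative f'' p) (at p)) \<and> (\<forall>w. continuous_on UNIV (\<lambda>p. f'' p w))"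
    by auto
  obtain g1 where g1: "\<And>p. ((\<lambda>p. f' p (1,0)) has_derivative g1 p) (at p)" "\<And>w. continuous_on UNIV (\<lambda>p. g1 p w)"
    using c[of "(1,0)"] by blast
  obtain g2 where g2: "\<And>p. ((\<lambda>p. f' p (0,1)) has_derivative g2 p) (at p)" "\<And>w. continuous_on UNIV (\<lambda>p. g2 p w)"
    using c[of "(0,1)"] by blast
  show ?thesis
  proof (rule that[of "\<lambda>x t. f' (x,t) (1,0)" "\<lambda>x t. f' (x,t) (0,1)"])
    show "((\<lambda>s. f (s,t)) has_vector_derivative f' (x,t) (1,0)) (at x)" for x t
      by (rule partial_x[OF d1])
    show "((\<lambda>\<tau>. f (x,\<tau>)) has_vector_derivative f' (x,t) (0,1)) (at t)" for x t
      by (rule partial_t[OF d1])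
    show "\<exists>m. ((\<lambda>s. f' (s,t) (0,1)) has_vector_derivative m) (at x) \<and>
              ((\<lambda>\<tau>. f' (x,\<tau>) (1,0)) has_vector_derivative m) (at t)" for x t
    proof (intro exI conjI)
      show "((\<lambda>s. f' (s,t) (0,1)) has_vector_derivative g2 (x,t) (1,0)) (at x)"
        by (rule partial_x[OF g2(1)])
      have "g1 (x,t) (0,1) = g2 (x,t) (1,0)"
        by (rule schwarz[OF d1 g1(1) g2(1) g1(2) g2(2)])
      then show "((\<lambda>\<tau>. f' (x,\<tau>) (1,0)) has_vector_derivative g2 (x,t) (1,0)) (at t)"
        using partial_t[OF g1(1), of x t] by simp
    qed
  qed
qed

definition cder :: "(real \<Rightarrow> complex poly) \<Rightarrow> complex poly \<Rightarrow> real \<Rightarrow> bool" where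
  "cder P P' a \<longleftrightarrow> (\<forall>k. ((\<lambda>s. coeff (P s) k) has_vector_derivative coeff P' k) (at a))"

lemma cder_const: "cder (\<lambda>s. p) 0 a"
  by (simp add: cder_def)

lemma cder_add: "cder P P' a \<Longrightarrow> cder Q Q' a \<Longrightarrow> cder (\<lambda>s. P s + Q s) (P' + Q') a"
  by (auto simp: cder_def intro!: has_vector_derivative_add)

lemma cder_diff: "cder P P' a \<Longrightarrow> cder Q Q' a \<Longrightarrow> cder (\<lambda>s. P s - Q s) (P' - Q') a"
  by (auto simp: cder_def intro!: has_vector_derivative_diff)

lemma cder_mult:
  assumes "cder P P' a" "cder Q Q' a"
  shows "cder (\<lambda>s. P s * Q s) (P' * Q a + P a * Q') a"
  unfolding cder_def
proof
  fix k
  have "((\<lambda>s. \<Sum>i\<le>k. coeff (P s) i * coeff (Q s) (k - i)) has_vector_derivative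
        (\<Sum>i\<le>k. coeff (P a) i * coeff Q' (k - i) + coeff P' i * coeff (Q a) (k - i))) (at a)"
    using assms unfolding cder_def by (intro has_vector_derivative_sum has_vector_derivative_mult) auto
  moreover have "(\<Sum>i\<le>k. coeff (P a) i * coeff Q' (k - i) + coeff P' i * coeff (Q a) (k - i))
      = coeff (P' * Q a + P a * Q') k"
    by (simp add: coeff_mult sum.distrib)
  ultimately show "((\<lambda>s. coeff (P s * Q s) k) has_vector_derivative coeff (P' * Q a + P a * Q') k) (at a)"
    by (simp add: coeff_mult)
qed

lemma cder_pconst:
  assumes "(f has_vector_derivative f') (at a)"
  shows "cder (\<lambda>s. [:f s:]) [:f':] a"
  unfolding cder_def
proof
  fix k show "((\<lambda>s. coeff [:f s:] k) has_vector_derivative coeff [:f':] k) (at a)"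
    using assms by (cases k) auto
qed

lemma poly_sumN:
  fixes p :: "complex poly"
  assumes "degree p \<le> N"
  shows "poly p z = (\<Sum>k\<le>N. coeff p k * z ^ k)"
proof -
  have "poly p z = (\<Sum>k\<le>degree p. coeff p k * z ^ k)" by (simp add: poly_altdef)
  also have "\<dots> = (\<Sum>k\<le>N. coeff p k * z ^ k)"
    by (rule sum.mono_neutral_left) (use assms in \<open>auto simp: coeff_eq_0\<close>)
  finally show ?thesis .
qed

lemma cder_bound:
  assumes "cder P P' a" "\<And>s. degree (P s) \<le> N"
  shows "degree P' \<le> N"
proof -
  have "coeff P' k = 0" if "k > N" for k
  proof -
    have "(\<lambda>s. coeff (P s) k) = (\<lambda>s. 0)"
      using assms(2) that by (auto intro!: coeff_eq_0 simp: fun_eq_iff) (meson le_less_trans)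
    then have "((\<lambda>s. 0::complex) has_vector_derivative coeff P' k) (at a)"
      using assms(1) unfolding cder_def by metis
    then show ?thesis using vector_derivative_unique_at has_vector_derivative_const by metis
  qed
  then show ?thesis by (meson degree_le leI)
qed

lemma cder_poly:
  assumes "cder P P' a" "\<And>s. degree (P s) \<le> N"
  shows "((\<lambda>s. poly (P s) z) has_vector_derivative poly P' z) (at a)"
proof -
  have "((\<lambda>s. \<Sum>k\<le>N. coeff (P s) k * z ^ k) has_vector_derivative (\<Sum>k\<le>N. coeff P' k * z ^ k)) (at a)"
    using assms(1) unfolding cder_def by (intro has_vector_derivative_sum has_vector_derivative_mult_left) auto
  moreover have "poly P' z = (\<Sum>k\<le>N. coeff P' k * z ^ k)"
    by (rule poly_sumN[OF cder_bound[OF assms]])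
  ultimately show ?thesis using poly_sumN[OF assms(2)] by simp
qed

lemma cder_from_poly:
  assumes deg: "\<And>s. degree (P s) \<le> N"
    and ex: "\<And>k. \<exists>d. ((\<lambda>s. coeff (P s) k) has_vector_derivative d) (at a)"
    and pd: "\<And>z. ((\<lambda>s. poly (P s) z) has_vector_derivative poly Q z) (at a)"
  shows "cder P Q a"
proof -
  obtain d where d: "\<And>k. ((\<lambda>s. coeff (P s) k) has_vector_derivative d k) (at a)"
    using ex by metis
  define R where "R = (\<Sum>k\<le>N. monom (d k) k)"
  have cR: "coeff R k = (if k \<le> N then d k else 0)" for k
    by (simp add: R_def coeff_sum)
  have "((\<lambda>s. poly (P s) z) has_vector_derivative poly R z) (at a)" for z
  proof -
    have "((\<lambda>s. \<Sum>k\<le>N. coeff (P s) k * z ^ k) has_vector_derivative (\<Sum>k\<le>N. d k * z ^ k)) (at a)"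
      using d by (intro has_vector_derivative_sum has_vector_derivative_mult_left) auto
    moreover have "poly R z = (\<Sum>k\<le>N. d k * z ^ k)"
      by (simp add: R_def poly_sum poly_monom)
    ultimately show ?thesis using poly_sumN[OF deg] by simp
  qed
  then have "poly R z = poly Q z" for z using pd vector_derivative_unique_at by metis
  then have RQ: "R = Q" using poly_eq_poly_eq_iff by blast
  have "d k = coeff Q k" for k
  proof (cases "k \<le> N")
    case True then show ?thesis using cR RQ by simp
  next
    case False
    have "(\<lambda>s. coeff (P s) k) = (\<lambda>s. 0)"
      using deg False by (auto intro!: coeff_eq_0 simp: fun_eq_iff) (meson le_less_trans not_le)
    then have "d k = 0" using d[of k] vector_derivative_unique_at has_vector_derivative_const by metis
    then show ?thesis using cR RQ False by simp
  qed
  then show ?thesis using d unfolding cder_def by simp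
qed

lemma coeff_mult_top:
  fixes p q :: "complex poly"
  assumes "\<And>j. a < j \<Longrightarrow> coeff p j = 0" "\<And>j. b < j \<Longrightarrow> coeff q j = 0"
  shows "coeff (p * q) (a + b) = coeff p a * coeff q b"
proof -
  have "coeff (p * q) (a + b) = (\<Sum>i\<le>a+b. coeff p i * coeff q (a + b - i))"
    by (simp add: coeff_mult)
  also have "\<dots> = coeff p a * coeff q (a + b - a) + (\<Sum>i\<in>{..a+b}-{a}. coeff p i * coeff q (a + b - i))"
    by (rule sum.remove) auto
  also have "(\<Sum>i\<in>{..a+b}-{a}. coeff p i * coeff q (a + b - i)) = 0"
  proof (rule sum.neutral, intro ballI)
    fix i assume "i \<in> {..a+b}-{a}"
    then show "coeff p i * coeff q (a + b - i) = 0"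
      using assms by (cases "a < i") auto
  qed
  finally show ?thesis by simp
qed

lemma coeff_mult_zero:
  fixes p q :: "complex poly"
  assumes "\<And>i. i \<le> m \<Longrightarrow> coeff p i = 0 \<or> coeff q (m - i) = 0"
  shows "coeff (p * q) m = 0"
  unfolding coeff_mult by (rule sum.neutral) (use assms in fastforce)

lemma coeff_X_mult: "coeff ([:0, c:] * p) (Suc k) = c * coeff p k"
  by (simp add: mult_pCons_left)

lemma coeff_const_mult: "coeff ([:c:] * p) k = c * coeff p k"
  by simp

lemma topdown_step:
  fixes A B C F G H :: "real \<Rightarrow> complex poly" and U :: "real \<Rightarrow> complex"
  assumes dA: "\<And>s. cder A (A' s) s" and dB: "\<And>s. cder B (B' s) s"
   and eA: "\<And>s. A' s = [:- \<i> * U s:] * A s - [:2 * \<i>:] * B s"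
   and eB: "\<And>s. B' s = [:0, \<i>:] * (C s - A s)"
   and cv: "\<And>s. [:2:] * G s * B s + A s * H s + F s * C s = 0"
   and dG: "\<And>s i. n \<le> i \<Longrightarrow> coeff (G s) i = 0"
   and dF: "\<And>s. degree (F s) = n \<and> lead_coeff (F s) = 1"
   and dH: "\<And>s. degree (H s) = n \<and> lead_coeff (H s) = 1"
   and IH: "\<And>j s. k < j \<Longrightarrow> coeff (A s) j = 0 \<and> coeff (B s) j = 0 \<and> coeff (C s) j = 0"
  shows "coeff (A s) k = 0 \<and> coeff (B s) k = 0 \<and> coeff (C s) k = 0"
proof -
  have zero_der: "coeff (P' s) j = 0"
    if "\<And>s. cder P (P' s) s" "\<And>s. coeff (P s) j = 0" for P P' j s
  proof -
    have "(\<lambda>s. coeff (P s) j) = (\<lambda>s. 0)" using that(2) by auto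
    then have "((\<lambda>s. 0::complex) has_vector_derivative coeff (P' s) j) (at s)"
      using that(1)[of s] unfolding cder_def by metis
    then show ?thesis using vector_derivative_unique_at has_vector_derivative_const by metis
  qed
  have CA: "coeff (C s) k = coeff (A s) k" for s
  proof -
    have "coeff (B' s) (Suc k) = 0" by (rule zero_der[OF dB]) (use IH in auto)
    then show ?thesis by (simp add: eB coeff_X_mult)
  qed
  have sumz: "coeff (A s) k + coeff (C s) k = 0" for s
  proof -
    have "coeff ([:2:] * G s * B s + A s * H s + F s * C s) (n + k) = 0" using cv by simp
    moreover have "coeff (G s * B s) (n + k) = 0"
    proof (rule coeff_mult_zero)
      fix i assume "i \<le> n + k"
      then show "coeff (G s) i = 0 \<or> coeff (B s) (n + k - i) = 0"
        using dG[of i s] IH[of "n + k - i" s] by (cases "n \<le> i") auto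
    qed
    moreover have "coeff (A s * H s) (k + n) = coeff (A s) k * coeff (H s) n"
      by (rule coeff_mult_top) (use IH dH[of s] coeff_eq_0[of "H s"] in auto)
    moreover have "coeff (F s * C s) (n + k) = coeff (F s) n * coeff (C s) k"
      by (rule coeff_mult_top) (use IH dF[of s] coeff_eq_0[of "F s"] in auto)
    moreover have "coeff (F s) n = 1" "coeff (H s) n = 1" using dF[of s] dH[of s] by auto
    ultimately show ?thesis
      by (simp add: add.commute mult.assoc coeff_const_mult del: mult_pCons_left)
  qed
  have Az: "coeff (A s) k = 0" for s using CA[of s] sumz[of s] by simp
  have Cz: "coeff (C s) k = 0" for s using CA[of s] Az[of s] by simp
  have "coeff (A' s) k = 0" by (rule zero_der[OF dA]) (use Az in auto)
  then have "coeff (B s) k = 0" using Az[of s] by (simp add: eA)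
  then show ?thesis using Az Cz by simp
qed

lemma topdown:
  fixes A B C F G H :: "real \<Rightarrow> complex poly" and U :: "real \<Rightarrow> complex"
  assumes dA: "\<And>s. cder A (A' s) s" and dB: "\<And>s. cder B (B' s) s"
   and eA: "\<And>s. A' s = [:- \<i> * U s:] * A s - [:2 * \<i>:] * B s"
   and eB: "\<And>s. B' s = [:0, \<i>:] * (C s - A s)"
   and cv: "\<And>s. [:2:] * G s * B s + A s * H s + F s * C s = 0"
   and dG: "\<And>s i. n \<le> i \<Longrightarrow> coeff (G s) i = 0"
   and dF: "\<And>s. degree (F s) = n \<and> lead_coeff (F s) = 1"
   and dH: "\<And>s. degree (H s) = n \<and> lead_coeff (H s) = 1"
   and bd: "\<And>j s. D < j \<Longrightarrow> coeff (A s) j = 0 \<and> coeff (B s) j = 0 \<and> coeff (C s) j = 0"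
  shows "A s = 0 \<and> B s = 0 \<and> C s = 0"
proof -
  have main: "\<forall>j s. D < j + m \<longrightarrow> coeff (A s) j = 0 \<and> coeff (B s) j = 0 \<and> coeff (C s) j = 0" for m
  proof (induction m)
    case 0 then show ?case using bd by simp
  next
    case (Suc m)
    show ?case
    proof (intro allI impI)
      fix j s assume j: "D < j + Suc m"
      show "coeff (A s) j = 0 \<and> coeff (B s) j = 0 \<and> coeff (C s) j = 0"
      proof (cases "D < j + m")
        case True then show ?thesis using Suc.IH by blast
      next
        case False
        show ?thesis
          by (rule topdown_step[OF dA dB eA eB cv dG dF dH]) (use Suc.IH False j in auto)
      qed
    qed
  qed
  show ?thesis using main[of "Suc D"] by (auto simp: poly_eq_iff)
qed

lemma vdiv:
  fixes f g :: "real \<Rightarrow> complex"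
  assumes f: "(f has_vector_derivative f') (at a)" and g: "(g has_vector_derivative g') (at a)"
    and nz: "g a \<noteq> 0"
  shows "((\<lambda>s. f s / g s) has_vector_derivative (f' * g a - f a * g') / (g a)\<^sup>2) (at a)"
proof -
  have "((inverse \<circ> g) has_vector_derivative (g' * (- (inverse (g a) ^ 2)))) (at a)"
    by (rule field_vector_diff_chain_at[OF g]) (use nz in \<open>auto intro!: derivative_eq_intros simp: power2_eq_square\<close>)
  then have i: "((\<lambda>s. inverse (g s)) has_vector_derivative (g' * (- (inverse (g a) ^ 2)))) (at a)"
    by (simp add: o_def)
  have "((\<lambda>s. f s * inverse (g s)) has_vector_derivative
         (f a * (g' * (- (inverse (g a) ^ 2))) + f' * inverse (g a))) (at a)"
    by (rule has_vector_derivative_mult[OF f i])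
  moreover have "f a * (g' * (- (inverse (g a) ^ 2))) + f' * inverse (g a) = (f' * g a - f a * g') / (g a)\<^sup>2"
    using nz by (simp add: field_simps power2_eq_square)
  ultimately show ?thesis by (simp add: divide_inverse)
qed

lemma phi_vals:
  fixes F G H y z :: complex
  assumes cv: "y\<^sup>2 = z\<^sup>2 * G\<^sup>2 + z * F * H" and nz: "F \<noteq> 0 \<or> y + z * G \<noteq> 0"
  defines "ph \<equiv> (if F \<noteq> 0 then (y - z * G) / F else z * H / (y + z * G))"
  shows "ph * F = y - z * G" "ph * (y + z * G) = z * H"
proof -
  have key: "(y - z * G) * (y + z * G) = z * F * H" using cv by (simp add: algebra_simps power2_eq_square)
  show "ph * F = y - z * G"
  proof (cases "F = 0")
    case True
    then have "y + z * G \<noteq> 0" using nz by simp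
    then have "y - z * G = 0" using key True by simp
    then show ?thesis using True by (simp add: ph_def)
  qed (simp add: ph_def)
  show "ph * (y + z * G) = z * H"
  proof (cases "F = 0")
    case True
    then have "y + z * G \<noteq> 0" using nz by simp
    then show ?thesis using True by (simp add: ph_def)
  next
    case False
    then have "ph * (y + z * G) = (y - z * G) * (y + z * G) / F" by (simp add: ph_def)
    also have "\<dots> = z * H" using key False by simp
    finally show ?thesis .
  qed
qed

lemma phi_path:
  fixes fF fG fH :: "real \<Rightarrow> complex" and y z :: complex
  assumes dF: "(fF has_vector_derivative dF) (at a)"
    and dG: "(fG has_vector_derivative dG) (at a)"
    and dH: "(fH has_vector_derivative dH) (at a)"
    and cv: "\<And>s. y\<^sup>2 = z\<^sup>2 * (fG s)\<^sup>2 + z * fF s * fH s"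
    and nz: "fF a \<noteq> 0 \<or> y + z * fG a \<noteq> 0"
  defines "ph \<equiv> \<lambda>s. if fF s \<noteq> 0 then (y - z * fG s) / fF s else z * fH s / (y + z * fG s)"
  shows "\<exists>p. (ph has_vector_derivative p) (at a) \<and> p * fF a + ph a * dF = - z * dG
           \<and> p * (y + z * fG a) + ph a * z * dG = z * dH"
proof -
  have v1: "ph a * fF a = y - z * fG a" and v2: "ph a * (y + z * fG a) = z * fH a"
    using phi_vals[OF cv nz] unfolding ph_def by auto
  have cd: "z\<^sup>2 * (fG a * dG + dG * fG a) + z * (fF a * dH + dF * fH a) = 0"
  proof -
    have "((\<lambda>s. z\<^sup>2 * (fG s * fG s) + z * (fF s * fH s)) has_vector_derivative
          (z\<^sup>2 * (fG a * dG + dG * fG a) + z * (fF a * dH + dF * fH a))) (at a)"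
      by (intro has_vector_derivative_add has_vector_derivative_mult_right has_vector_derivative_mult dF dG dH)
    moreover have "(\<lambda>s. z\<^sup>2 * (fG s * fG s) + z * (fF s * fH s)) = (\<lambda>s. y\<^sup>2)"
      using cv by (auto simp: fun_eq_iff power2_eq_square mult.assoc)
    ultimately show ?thesis using vector_derivative_unique_at has_vector_derivative_const by metis
  qed
  show ?thesis
  proof (cases "fF a \<noteq> 0")
    case True
    have "continuous (at a) fF" using dF has_vector_derivative_continuous by blast
    then obtain e where e: "e > 0" "\<And>s. dist a s < e \<Longrightarrow> fF s \<noteq> 0"
      using continuous_at_avoid[of a fF 0] True by blast
    define p where "p = ((- z * dG) * fF a - (y - z * fG a) * dF) / (fF a)\<^sup>2"
    have num: "((\<lambda>s. y - z * fG s) has_vector_derivative (0 - z * dG)) (at a)"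
      by (intro has_vector_derivative_diff has_vector_derivative_const has_vector_derivative_mult_right dG)
    have "((\<lambda>s. (y - z * fG s) / fF s) has_vector_derivative p) (at a)"
      unfolding p_def using vdiv[OF num dF True] by simp
    then have hp: "(ph has_vector_derivative p) (at a)"
      by (rule has_vector_derivative_transform_within[OF _ e(1), where S=UNIV, simplified])
         (use e(2) in \<open>auto simp: ph_def dist_commute\<close>)
    have r1: "p * fF a + ph a * dF = - z * dG"
      using True v1[symmetric] unfolding p_def by (simp add: field_simps power2_eq_square)
    have "fF a * (p * (y + z * fG a) + ph a * z * dG - z * dH) = 0"
    proof -
      have "fF a * (p * (y + z * fG a) + ph a * z * dG - z * dH)
          = (p * fF a) * (y + z * fG a) + (ph a * fF a) * z * dG - z * fF a * dH"
        by (simp add: algebra_simps)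
      also have "\<dots> = (- z * dG - ph a * dF) * (y + z * fG a) + (y - z * fG a) * z * dG - z * fF a * dH"
      proof -
        have e1: "p * fF a = - z * dG - ph a * dF" using r1 by (simp add: eq_diff_eq)
        show ?thesis unfolding e1 v1 ..
      qed
      also have "\<dots> = - z * dG * (y + z * fG a) - (ph a * (y + z * fG a)) * dF + (y - z * fG a) * z * dG - z * fF a * dH"
        by (simp add: algebra_simps)
      also have "\<dots> = - z * dG * (y + z * fG a) - (z * fH a) * dF + (y - z * fG a) * z * dG - z * fF a * dH"
        unfolding v2 ..
      also have "\<dots> = - (z\<^sup>2 * (fG a * dG + dG * fG a) + z * (fF a * dH + dF * fH a))"
        by (simp add: algebra_simps power2_eq_square)
      also have "\<dots> = 0" using cd by simp
      finally show ?thesis .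
    qed
    then have r2: "p * (y + z * fG a) + ph a * z * dG = z * dH" using True by simp
    show ?thesis using hp r1 r2 by blast
  next
    case False
    then have F0: "fF a = 0" by simp
    then have nz2: "y + z * fG a \<noteq> 0" using nz by simp
    have "continuous (at a) (\<lambda>s. y + z * fG s)"
      using dG has_vector_derivative_continuous by (auto intro!: continuous_intros)
    then obtain e where e: "e > 0" "\<And>s. dist a s < e \<Longrightarrow> y + z * fG s \<noteq> 0"
      using continuous_at_avoid[of a "\<lambda>s. y + z * fG s" 0] nz2 by blast
    define p where "p = ((z * dH) * (y + z * fG a) - (z * fH a) * (z * dG)) / (y + z * fG a)\<^sup>2"
    have num: "((\<lambda>s. z * fH s) has_vector_derivative (z * dH)) (at a)"
      by (intro has_vector_derivative_mult_right dH)
    have den: "((\<lambda>s. y + z * fG s) has_vector_derivative (0 + z * dG)) (at a)"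
      by (intro has_vector_derivative_add has_vector_derivative_const has_vector_derivative_mult_right dG)
    have der: "((\<lambda>s. (z * fH s) / (y + z * fG s)) has_vector_derivative p) (at a)"
      unfolding p_def using vdiv[OF num den nz2] by simp
    have phs: "ph s = (z * fH s) / (y + z * fG s)" if "dist a s < e" for s
    proof -
      have ns: "y + z * fG s \<noteq> 0" using e(2) that by blast
      have "ph s * (y + z * fG s) = z * fH s"
        using phi_vals(2)[OF cv[of s]] ns unfolding ph_def by blast
      then show ?thesis using ns by (simp add: eq_divide_eq)
    qed
    have hp: "(ph has_vector_derivative p) (at a)"
    proof (rule has_vector_derivative_transform_within[OF der e(1)])
      fix s assume "s \<in> UNIV" "dist s a < e"
      then have "dist a s < e" by (simp add: dist_commute)
      from phs[OF this] show "z * fH s / (y + z * fG s) = ph s" by simp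
    qed simp
    have p2: "p = (z * dH - ph a * z * dG) / (y + z * fG a)"
    proof -
      have "(z * dH) * (y + z * fG a) - (ph a * (y + z * fG a)) * (z * dG)
          = (z * dH - ph a * z * dG) * (y + z * fG a)" by (simp add: algebra_simps)
      then have "p = ((z * dH - ph a * z * dG) * (y + z * fG a)) / ((y + z * fG a) * (y + z * fG a))"
        unfolding p_def v2[symmetric] power2_eq_square by simp
      then show ?thesis using nz2 by simp
    qed
    have r2: "p * (y + z * fG a) + ph a * z * dG = z * dH"
      unfolding p2 using nz2 by simp
    have "(y + z * fG a) * (p * fF a + ph a * dF + z * dG) = 0"
    proof -
      have "(y + z * fG a) * (p * fF a + ph a * dF + z * dG)
          = fF a * (p * (y + z * fG a)) + (ph a * (y + z * fG a)) * dF + z * dG * (y + z * fG a)"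
        by (simp add: algebra_simps)
      also have "\<dots> = fF a * (z * dH - ph a * z * dG) + z * fH a * dF + z * dG * (y + z * fG a)"
      proof -
        have e2: "p * (y + z * fG a) = z * dH - ph a * z * dG" using r2 by (simp add: eq_diff_eq)
        show ?thesis unfolding e2 v2 ..
      qed
      also have "\<dots> = z * fF a * dH - (ph a * fF a) * z * dG + z * fH a * dF + z * dG * (y + z * fG a)"
        by (simp add: algebra_simps)
      also have "\<dots> = z * fF a * dH - (y - z * fG a) * z * dG + z * fH a * dF + z * dG * (y + z * fG a)"
        unfolding v1 ..
      also have "\<dots> = z\<^sup>2 * (fG a * dG + dG * fG a) + z * (fF a * dH + dF * fH a)"
        by (simp add: algebra_simps power2_eq_square)
      also have "\<dots> = 0" using cd by simp
      finally show ?thesis .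
    qed
    then have "p * fF a + ph a * dF + z * dG = 0" using nz2 by simp
    then have r1: "p * fF a + ph a * dF = - z * dG" by (metis eq_neg_iff_add_eq_0 minus_mult_left)
    show ?thesis using hp r1 r2 by blast
  qed
qed

lemma fam:
  assumes "smooth_poly_family Q"
  obtains QX QT where
    "\<And>k x t. ((\<lambda>s. coeff (Q s t) k) has_vector_derivative QX k x t) (at x)"
    "\<And>k x t. ((\<lambda>\<tau>. coeff (Q x \<tau>) k) has_vector_derivative QT k x t) (at t)"
    "\<And>k x t. \<exists>m. ((\<lambda>s. QT k s t) has_vector_derivative m) (at x) \<and> ((\<lambda>\<tau>. QX k x \<tau>) has_vector_derivative m) (at t)"
proof -
  have "\<forall>k. \<exists>p. (\<forall>x t. ((\<lambda>s. coeff (Q s t) k) has_vector_derivative fst p x t) (at x)) \<and>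
      (\<forall>x t. ((\<lambda>\<tau>. coeff (Q x \<tau>) k) has_vector_derivative snd p x t) (at t)) \<and>
      (\<forall>x t. \<exists>m. ((\<lambda>s. snd p s t) has_vector_derivative m) (at x) \<and> ((\<lambda>\<tau>. fst p x \<tau>) has_vector_derivative m) (at t))"
  proof
    fix k
    have "smooth_UNIV (\<lambda>(x,t). coeff (Q x t) k)" using assms unfolding smooth_poly_family_def by blast
    obtain fx ft where
      "\<And>x t. ((\<lambda>s. (\<lambda>(x,t). coeff (Q x t) k) (s,t)) has_vector_derivative fx x t) (at x)"
      "\<And>x t. ((\<lambda>\<tau>. (\<lambda>(x,t). coeff (Q x t) k) (x,\<tau>)) has_vector_derivative ft x t) (at t)"
      "\<And>x t. \<exists>m. ((\<lambda>s. ft s t) has_vector_derivative m) (at x) \<and> ((\<lambda>\<tau>. fx x \<tau>) has_vector_derivative m) (at t)"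
      by (rule smooth_mixed[of "\<lambda>(x,t). coeff (Q x t) k", OF \<open>smooth_UNIV _\<close>]) blast
    then show "\<exists>p. (\<forall>x t. ((\<lambda>s. coeff (Q s t) k) has_vector_derivative fst p x t) (at x)) \<and>
      (\<forall>x t. ((\<lambda>\<tau>. coeff (Q x \<tau>) k) has_vector_derivative snd p x t) (at t)) \<and>
      (\<forall>x t. \<exists>m. ((\<lambda>s. snd p s t) has_vector_derivative m) (at x) \<and> ((\<lambda>\<tau>. fst p x \<tau>) has_vector_derivative m) (at t))"
      by (intro exI[of _ "(fx, ft)"]) simp
  qed
  then obtain P where P: "\<And>k. (\<forall>x t. ((\<lambda>s. coeff (Q s t) k) has_vector_derivative fst (P k) x t) (at x)) \<and>
      (\<forall>x t. ((\<lambda>\<tau>. coeff (Q x \<tau>) k) has_vector_derivative snd (P k) x t) (at t)) \<and>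
      (\<forall>x t. \<exists>m. ((\<lambda>s. snd (P k) s t) has_vector_derivative m) (at x) \<and> ((\<lambda>\<tau>. fst (P k) x \<tau>) has_vector_derivative m) (at t))"
    by metis
  show ?thesis
    by (rule that[of "\<lambda>k. fst (P k)" "\<lambda>k. snd (P k)"]) (use P in auto)
qed

definition tpoly :: "(nat \<Rightarrow> real \<Rightarrow> real \<Rightarrow> complex) \<Rightarrow> nat \<Rightarrow> real \<Rightarrow> real \<Rightarrow> complex poly" where
  "tpoly QT N x t = (\<Sum>k\<le>N. monom (QT k x t) k)"

lemma tcder:
  assumes deg: "\<And>\<tau>. degree (Q x \<tau>) \<le> N"
    and QT: "\<And>k. ((\<lambda>\<tau>. coeff (Q x \<tau>) k) has_vector_derivative QT k x t) (at t)"
  shows "coeff (tpoly QT N x t) k = QT k x t" "cder (\<lambda>\<tau>. Q x \<tau>) (tpoly QT N x t) t"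
proof -
  have c: "coeff (tpoly QT N x t) k = QT k x t" for k
  proof (cases "k \<le> N")
    case True then show ?thesis by (simp add: tpoly_def coeff_sum)
  next
    case False
    have "(\<lambda>\<tau>. coeff (Q x \<tau>) k) = (\<lambda>\<tau>. 0)"
      using deg False by (auto intro!: coeff_eq_0 simp: fun_eq_iff) (meson le_less_trans not_le)
    then have "QT k x t = 0" using QT[of k] vector_derivative_unique_at has_vector_derivative_const by metis
    then show ?thesis using False by (simp add: tpoly_def coeff_sum)
  qed
  then show "coeff (tpoly QT N x t) k = QT k x t" .
  show "cder (\<lambda>\<tau>. Q x \<tau>) (tpoly QT N x t) t" unfolding cder_def using QT c by simp
qed

lemma xcder:
  assumes deg: "\<And>s. degree (Q s t) \<le> N"
   and QX: "\<And>k. ((\<lambda>s. coeff (Q s t) k) has_vector_derivative QX k x t) (at x)"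
   and eq: "\<And>z. ((\<lambda>s. poly (Q s t) z) has_vector_derivative poly W z) (at x)"
  shows "cder (\<lambda>s. Q s t) W x" "QX k x t = coeff W k"
proof -
  show c: "cder (\<lambda>s. Q s t) W x"
    by (rule cder_from_poly[OF deg _ eq]) (use QX in blast)
  show "QX k x t = coeff W k"
    using c QX[of k] unfolding cder_def using vector_derivative_unique_at by blast
qed

lemma mixed_cder:
  assumes mix: "\<And>k. \<exists>m. ((\<lambda>s. QT k s t) has_vector_derivative m) (at x) \<and> ((\<lambda>\<tau>. QX k x \<tau>) has_vector_derivative m) (at t)"
   and QXeq: "\<And>k \<tau>. QX k x \<tau> = coeff (V \<tau>) k"
   and tc: "cder V W t"
   and tco: "\<And>k s. coeff (TP s) k = QT k s t"
  shows "cder TP W x"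
  unfolding cder_def
proof
  fix k
  obtain m where m1: "((\<lambda>s. QT k s t) has_vector_derivative m) (at x)"
    and m2: "((\<lambda>\<tau>. QX k x \<tau>) has_vector_derivative m) (at t)" using mix by blast
  have "((\<lambda>\<tau>. QX k x \<tau>) has_vector_derivative coeff W k) (at t)"
    using tc unfolding cder_def QXeq by blast
  then have "m = coeff W k" using m2 vector_derivative_unique_at by blast
  then show "((\<lambda>s. coeff (TP s) k) has_vector_derivative coeff W k) (at x)"
    using m1 by (simp add: tco)
qed

lemma deg_tpoly: "degree (tpoly QT N x t) \<le> N"
  unfolding tpoly_def by (rule degree_sum_le) (auto intro: order_trans[OF degree_monom_le])

lemma ii_test: "\<i> * a * (\<i> * b) + a * b = (0::complex)"
  by (simp add: algebra_simps)

lemma deg_mult: "degree p \<le> a \<Longrightarrow> degree q \<le> b \<Longrightarrow> degree (p * q) \<le> a + b"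
  for p q :: "complex poly"
  using degree_mult_le[of p q] by linarith

lemma deg_cmult: "degree p \<le> a \<Longrightarrow> degree ([:c:] * p) \<le> a"
  for p :: "complex poly"
  by (simp add: order_trans[OF degree_smult_le])

lemma deg_X: "degree p \<le> a \<Longrightarrow> degree ([:0,1:] * p) \<le> a + 1"
  for p :: "complex poly"
  using deg_mult[of "[:0,1:]" 1 p a] by (simp add: add.commute)

lemma deg_diff: "degree p \<le> a \<Longrightarrow> degree q \<le> a \<Longrightarrow> degree (p - q) \<le> a"
  for p q :: "complex poly"
  by (rule degree_diff_le)

lemma deg_mono: "degree p \<le> a \<Longrightarrow> a \<le> b \<Longrightarrow> degree p \<le> b"
  for p :: "complex poly" by simp

lemma core:
  fixes n r :: nat and UX UXT :: "real \<Rightarrow> real \<Rightarrow> real"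
    and F G H Ft Gt Ht :: "real \<Rightarrow> real \<Rightarrow> complex poly" and Rz :: "complex \<Rightarrow> complex"
  assumes n_pos: "n \<ge> 1"
    and sm: "smooth_poly_family F" "smooth_poly_family G" "smooth_poly_family H"
            "smooth_poly_family Ft" "smooth_poly_family Gt" "smooth_poly_family Ht"
    and degF: "\<And>x t. degree (F x t) = n \<and> lead_coeff (F x t) = 1"
    and degH: "\<And>x t. degree (H x t) = n \<and> lead_coeff (H x t) = 1"
    and degG: "\<And>x t. degree (G x t) \<le> n - 1"
    and degFt: "\<And>x t. degree (Ft x t) = r"
    and degHt: "\<And>x t. degree (Ht x t) = r"
    and degGt: "\<And>x t. degree (Gt x t) \<le> r - 1"
    and hU: "\<And>x t. ((\<lambda>\<tau>. UX x \<tau>) has_real_derivative UXT x t) (at t)"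
    and eqF: "\<And>z x t. ((\<lambda>s. poly (F s t) z) has_vector_derivative
               (- \<i> * complex_of_real (UX x t) * poly (F x t) z
                - 2 * \<i> * z * poly (G x t) z)) (at x)"
    and eqH: "\<And>z x t. ((\<lambda>s. poly (H s t) z) has_vector_derivative
               (\<i> * complex_of_real (UX x t) * poly (H x t) z
                + 2 * \<i> * z * poly (G x t) z)) (at x)"
    and eqG: "\<And>z x t. ((\<lambda>s. poly (G s t) z) has_vector_derivative
               (\<i> * (poly (H x t) z - poly (F x t) z))) (at x)"
    and eqFt: "\<And>z x t. ((\<lambda>s. poly (Ft s t) z) has_vector_derivative
               (- \<i> * complex_of_real (UX x t) * poly (Ft x t) z
                - 2 * \<i> * z * poly (Gt x t) z)) (at x)"
    and eqHt: "\<And>z x t. ((\<lambda>s. poly (Ht s t) z) has_vector_derivative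
               (\<i> * complex_of_real (UX x t) * poly (Ht x t) z
                + 2 * \<i> * z * poly (Gt x t) z)) (at x)"
    and eqU: "\<And>z x t. \<exists>dGt. ((\<lambda>s. poly (Gt s t) z) has_vector_derivative dGt) (at x) \<and>
               complex_of_real (UXT x t)
                 = - 2 * \<i> * dGt - 2 * (poly (Ht x t) z - poly (Ft x t) z)"
    and curve: "\<And>z x t. z\<^sup>2 * (poly (G x t) z)\<^sup>2 + z * poly (F x t) z * poly (H x t) z = Rz z"
  shows "((\<lambda>\<tau>. poly (F x \<tau>) z) has_vector_derivative
            2 * (poly (G x t) z * poly (Ft x t) z - poly (F x t) z * poly (Gt x t) z)) (at t)
    \<and> (\<exists>dG. ((\<lambda>\<tau>. poly (G x \<tau>) z) has_vector_derivative dG) (at t) \<and>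
            z * dG = poly (F x t) z * poly (Ht x t) z - poly (Ft x t) z * poly (H x t) z)
    \<and> ((\<lambda>\<tau>. poly (H x \<tau>) z) has_vector_derivative
            2 * (poly (H x t) z * poly (Gt x t) z - poly (G x t) z * poly (Ht x t) z)) (at t)"
proof -
  obtain FX FT where FX: "\<And>k x t. ((\<lambda>s. coeff (F s t) k) has_vector_derivative FX k x t) (at x)"
    and FT: "\<And>k x t. ((\<lambda>\<tau>. coeff (F x \<tau>) k) has_vector_derivative FT k x t) (at t)"
    and FM: "\<And>k x t. \<exists>m. ((\<lambda>s. FT k s t) has_vector_derivative m) (at x) \<and> ((\<lambda>\<tau>. FX k x \<tau>) has_vector_derivative m) (at t)"
    by (rule fam[OF sm(1)]) blast
  obtain GX GT where GX: "\<And>k x t. ((\<lambda>s. coeff (G s t) k) has_vector_derivative GX k x t) (at x)"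
    and GT: "\<And>k x t. ((\<lambda>\<tau>. coeff (G x \<tau>) k) has_vector_derivative GT k x t) (at t)"
    and GM: "\<And>k x t. \<exists>m. ((\<lambda>s. GT k s t) has_vector_derivative m) (at x) \<and> ((\<lambda>\<tau>. GX k x \<tau>) has_vector_derivative m) (at t)"
    by (rule fam[OF sm(2)]) blast
  obtain HX HT where HX: "\<And>k x t. ((\<lambda>s. coeff (H s t) k) has_vector_derivative HX k x t) (at x)"
    and HT: "\<And>k x t. ((\<lambda>\<tau>. coeff (H x \<tau>) k) has_vector_derivative HT k x t) (at t)"
    and HM: "\<And>k x t. \<exists>m. ((\<lambda>s. HT k s t) has_vector_derivative m) (at x) \<and> ((\<lambda>\<tau>. HX k x \<tau>) has_vector_derivative m) (at t)"
    by (rule fam[OF sm(3)]) blast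
  obtain FtX FtT where FtX: "\<And>k x t. ((\<lambda>s. coeff (Ft s t) k) has_vector_derivative FtX k x t) (at x)"
    by (rule fam[OF sm(4)]) blast
  obtain GtX GtT where GtX: "\<And>k x t. ((\<lambda>s. coeff (Gt s t) k) has_vector_derivative GtX k x t) (at x)"
    by (rule fam[OF sm(5)]) blast
  obtain HtX HtT where HtX: "\<And>k x t. ((\<lambda>s. coeff (Ht s t) k) has_vector_derivative HtX k x t) (at x)"
    by (rule fam[OF sm(6)]) blast
  have dF: "\<And>x t. degree (F x t) \<le> n" using degF by simp
  have dH: "\<And>x t. degree (H x t) \<le> n" using degH by simp
  have dG: "\<And>x t. degree (G x t) \<le> n" using degG by (meson diff_le_self order_trans)
  have dFt: "\<And>x t. degree (Ft x t) \<le> r" using degFt by simp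
  have dHt: "\<And>x t. degree (Ht x t) \<le> r" using degHt by simp
  have dGt: "\<And>x t. degree (Gt x t) \<le> r" using degGt by (meson diff_le_self order_trans)
  have dGlt: "\<And>x t i. n \<le> i \<Longrightarrow> coeff (G x t) i = 0"
  proof -
    fix x t i assume "n \<le> i"
    then have "degree (G x t) < i" using degG[of x t] n_pos by linarith
    then show "coeff (G x t) i = 0" by (rule coeff_eq_0)
  qed
  define X :: "complex poly" where "X = [:0,1:]"
  have pX: "poly X w = w" for w by (simp add: X_def)
  define FXp where "FXp = (\<lambda>s t. [:- \<i> * of_real (UX s t):] * F s t - [:2 * \<i>:] * (X * G s t))"
  define HXp where "HXp = (\<lambda>s t. [:\<i> * of_real (UX s t):] * H s t + [:2 * \<i>:] * (X * G s t))"
  define GXp where "GXp = (\<lambda>s t. [:\<i>:] * (H s t - F s t))"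
  define FtXp where "FtXp = (\<lambda>s t. [:- \<i> * of_real (UX s t):] * Ft s t - [:2 * \<i>:] * (X * Gt s t))"
  define HtXp where "HtXp = (\<lambda>s t. [:\<i> * of_real (UX s t):] * Ht s t + [:2 * \<i>:] * (X * Gt s t))"
  define GtXp where "GtXp = (\<lambda>s t. [:\<i> / 2 * of_real (UXT s t):] + [:\<i>:] * (Ht s t - Ft s t))"
  have eFX: "((\<lambda>\<sigma>. poly (F \<sigma> t) w) has_vector_derivative poly (FXp s t) w) (at s)" for s t w
  proof -
    have "poly (FXp s t) w = - \<i> * complex_of_real (UX s t) * poly (F s t) w - 2 * \<i> * w * poly (G s t) w"
      by (simp add: FXp_def pX algebra_simps)
    then show ?thesis using eqF[where z=w and x=s and t=t] by simp
  qed
  have eHX: "((\<lambda>\<sigma>. poly (H \<sigma> t) w) has_vector_derivative poly (HXp s t) w) (at s)" for s t w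
  proof -
    have "poly (HXp s t) w = \<i> * complex_of_real (UX s t) * poly (H s t) w + 2 * \<i> * w * poly (G s t) w"
      by (simp add: HXp_def pX algebra_simps)
    then show ?thesis using eqH[where z=w and x=s and t=t] by simp
  qed
  have eGX: "((\<lambda>\<sigma>. poly (G \<sigma> t) w) has_vector_derivative poly (GXp s t) w) (at s)" for s t w
  proof -
    have "poly (GXp s t) w = \<i> * (poly (H s t) w - poly (F s t) w)"
      by (simp add: GXp_def)
    then show ?thesis using eqG[where z=w and x=s and t=t] by simp
  qed
  have eFtX: "((\<lambda>\<sigma>. poly (Ft \<sigma> t) w) has_vector_derivative poly (FtXp s t) w) (at s)" for s t w
  proof -
    have "poly (FtXp s t) w = - \<i> * complex_of_real (UX s t) * poly (Ft s t) w - 2 * \<i> * w * poly (Gt s t) w"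
      by (simp add: FtXp_def pX algebra_simps)
    then show ?thesis using eqFt[where z=w and x=s and t=t] by simp
  qed
  have eHtX: "((\<lambda>\<sigma>. poly (Ht \<sigma> t) w) has_vector_derivative poly (HtXp s t) w) (at s)" for s t w
  proof -
    have "poly (HtXp s t) w = \<i> * complex_of_real (UX s t) * poly (Ht s t) w + 2 * \<i> * w * poly (Gt s t) w"
      by (simp add: HtXp_def pX algebra_simps)
    then show ?thesis using eqHt[where z=w and x=s and t=t] by simp
  qed
  have eGtX: "((\<lambda>\<sigma>. poly (Gt \<sigma> t) w) has_vector_derivative poly (GtXp s t) w) (at s)" for s t w
  proof -
    obtain d where d1: "((\<lambda>\<sigma>. poly (Gt \<sigma> t) w) has_vector_derivative d) (at s)"
      and d2: "complex_of_real (UXT s t) = - 2 * \<i> * d - 2 * (poly (Ht s t) w - poly (Ft s t) w)"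
      using eqU[where z=w and x=s and t=t] by blast
    have "poly (GtXp s t) w = \<i> / 2 * complex_of_real (UXT s t) + \<i> * (poly (Ht s t) w - poly (Ft s t) w)"
      by (simp add: GtXp_def)
    also have "\<dots> = d" unfolding d2 by (simp add: algebra_simps)
    finally show ?thesis using d1 by simp
  qed
  have cxF: "cder (\<lambda>\<sigma>. F \<sigma> t) (FXp s t) s" "FX k s t = coeff (FXp s t) k" for s t k
    using xcder[where Q=F and t=t and N=n and QX=FX and x=s and W="FXp s t", OF dF FX eFX] by auto
  have cxG: "cder (\<lambda>\<sigma>. G \<sigma> t) (GXp s t) s" "GX k s t = coeff (GXp s t) k" for s t k
    using xcder[where Q=G and t=t and N=n and QX=GX and x=s and W="GXp s t", OF dG GX eGX] by auto
  have cxH: "cder (\<lambda>\<sigma>. H \<sigma> t) (HXp s t) s" "HX k s t = coeff (HXp s t) k" for s t k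
    using xcder[where Q=H and t=t and N=n and QX=HX and x=s and W="HXp s t", OF dH HX eHX] by auto
  have cxFt: "cder (\<lambda>\<sigma>. Ft \<sigma> t) (FtXp s t) s" for s t
    using xcder[where Q=Ft and t=t and N=r and QX=FtX and x=s and W="FtXp s t", OF dFt FtX eFtX] by auto
  have cxGt: "cder (\<lambda>\<sigma>. Gt \<sigma> t) (GtXp s t) s" for s t
    using xcder[where Q=Gt and t=t and N=r and QX=GtX and x=s and W="GtXp s t", OF dGt GtX eGtX] by auto
  have cxHt: "cder (\<lambda>\<sigma>. Ht \<sigma> t) (HtXp s t) s" for s t
    using xcder[where Q=Ht and t=t and N=r and QX=HtX and x=s and W="HtXp s t", OF dHt HtX eHtX] by auto

  define TF where "TF = tpoly FT n"
  define TG where "TG = tpoly GT n"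
  define TH where "TH = tpoly HT n"
  have ctF: "cder (\<lambda>\<tau>. F s \<tau>) (TF s t') t'" "coeff (TF s t') k = FT k s t'" for s t' k
    unfolding TF_def using tcder[where Q=F and x=s and N=n and QT=FT and t=t', OF dF FT] by auto
  have ctG: "cder (\<lambda>\<tau>. G s \<tau>) (TG s t') t'" "coeff (TG s t') k = GT k s t'" for s t' k
    unfolding TG_def using tcder[where Q=G and x=s and N=n and QT=GT and t=t', OF dG GT] by auto
  have ctH: "cder (\<lambda>\<tau>. H s \<tau>) (TH s t') t'" "coeff (TH s t') k = HT k s t'" for s t' k
    unfolding TH_def using tcder[where Q=H and x=s and N=n and QT=HT and t=t', OF dH HT] by auto
  have cU: "cder (\<lambda>\<tau>. [:c * of_real (UX s \<tau>):]) [:c * of_real (UXT s t'):] t'" for c s t'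
    by (rule cder_pconst) (intro has_vector_derivative_mult_right has_vector_derivative_of_real hU)
  define WF where "WF = (\<lambda>s t'. ([:- \<i> * of_real (UXT s t'):] * F s t' + [:- \<i> * of_real (UX s t'):] * TF s t')
      - (0 * (X * G s t') + [:2 * \<i>:] * (0 * G s t' + X * TG s t')))"
  define WG where "WG = (\<lambda>s t'. 0 * (H s t' - F s t') + [:\<i>:] * (TH s t' - TF s t'))"
  define WH where "WH = (\<lambda>s t'. ([:\<i> * of_real (UXT s t'):] * H s t' + [:\<i> * of_real (UX s t'):] * TH s t')
      + (0 * (X * G s t') + [:2 * \<i>:] * (0 * G s t' + X * TG s t')))"
  have ctFX: "cder (\<lambda>\<tau>. FXp s \<tau>) (WF s t') t'" for s t'
    unfolding FXp_def WF_def by (intro cder_diff cder_add cder_mult cder_const cU ctF ctG)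
  have ctGX: "cder (\<lambda>\<tau>. GXp s \<tau>) (WG s t') t'" for s t'
    unfolding GXp_def WG_def by (intro cder_diff cder_add cder_mult cder_const cU ctF ctH)
  have ctHX: "cder (\<lambda>\<tau>. HXp s \<tau>) (WH s t') t'" for s t'
    unfolding HXp_def WH_def by (intro cder_diff cder_add cder_mult cder_const cU ctH ctG)
  have cmF: "cder (\<lambda>\<sigma>. TF \<sigma> t) (WF s t) s" for s
    by (rule mixed_cder[where QT=FT and QX=FX and V="\<lambda>\<tau>. FXp s \<tau>", OF FM cxF(2) ctFX ctF(2)])
  have cmG: "cder (\<lambda>\<sigma>. TG \<sigma> t) (WG s t) s" for s
    by (rule mixed_cder[where QT=GT and QX=GX and V="\<lambda>\<tau>. GXp s \<tau>", OF GM cxG(2) ctGX ctG(2)])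
  have cmH: "cder (\<lambda>\<sigma>. TH \<sigma> t) (WH s t) s" for s
    by (rule mixed_cder[where QT=HT and QX=HX and V="\<lambda>\<tau>. HXp s \<tau>", OF HM cxH(2) ctHX ctH(2)])

  define A where "A = (\<lambda>s. TF s t - [:2:] * (G s t * Ft s t - F s t * Gt s t))"
  define B where "B = (\<lambda>s. X * TG s t - (F s t * Ht s t - Ft s t * H s t))"
  define C where "C = (\<lambda>s. TH s t - [:2:] * (H s t * Gt s t - G s t * Ht s t))"
  define A' where "A' = (\<lambda>s. WF s t - (0 * (G s t * Ft s t - F s t * Gt s t) + [:2:] *
     ((GXp s t * Ft s t + G s t * FtXp s t) - (FXp s t * Gt s t + F s t * GtXp s t))))"
  define B' where "B' = (\<lambda>s. (0 * TG s t + X * WG s t) -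
     ((FXp s t * Ht s t + F s t * HtXp s t) - (FtXp s t * H s t + Ft s t * HXp s t)))"
  have dA: "cder A (A' s) s" for s
    unfolding A_def A'_def by (intro cder_diff cder_add cder_mult cder_const cmF cxF(1) cxG(1) cxFt cxGt)
  have dB: "cder B (B' s) s" for s
    unfolding B_def B'_def by (intro cder_diff cder_add cder_mult cder_const cmG cxF(1) cxH(1) cxFt cxHt)
  have eA: "A' s = [:- \<i> * of_real (UX s t):] * A s - [:2 * \<i>:] * B s" for s
    unfolding poly_eq_poly_eq_iff[symmetric] fun_eq_iff
    by (simp add: A_def A'_def B_def WF_def GXp_def FtXp_def FXp_def GtXp_def pX algebra_simps)
  have eB: "B' s = [:0, \<i>:] * (C s - A s)" for s
    unfolding poly_eq_poly_eq_iff[symmetric] fun_eq_iff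
    by (simp add: A_def C_def B'_def WG_def HXp_def HtXp_def FtXp_def FXp_def pX algebra_simps)

  have Vz: "[:2:] * X * G s t * TG s t + TF s t * H s t + F s t * TH s t = 0" for s
  proof -
    have "poly (X * ([:2:] * X * G s t * TG s t + TF s t * H s t + F s t * TH s t)) w = 0" for w
    proof -
      have d1: "((\<lambda>\<tau>. w\<^sup>2 * (poly (G s \<tau>) w * poly (G s \<tau>) w) + w * (poly (F s \<tau>) w * poly (H s \<tau>) w))
          has_vector_derivative (w\<^sup>2 * (poly (G s t) w * poly (TG s t) w + poly (TG s t) w * poly (G s t) w)
            + w * (poly (F s t) w * poly (TH s t) w + poly (TF s t) w * poly (H s t) w))) (at t)"
        by (intro has_vector_derivative_add has_vector_derivative_mult_right has_vector_derivative_mult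
            cder_poly[OF ctF(1) dF] cder_poly[OF ctG(1) dG] cder_poly[OF ctH(1) dH])
      have "w\<^sup>2 * (poly (G s \<tau>) w * poly (G s \<tau>) w) + w * (poly (F s \<tau>) w * poly (H s \<tau>) w) = Rz w" for \<tau>
        using curve[where z=w and x=s and t=\<tau>] by (simp add: power2_eq_square mult.assoc)
      then have "(\<lambda>\<tau>. w\<^sup>2 * (poly (G s \<tau>) w * poly (G s \<tau>) w) + w * (poly (F s \<tau>) w * poly (H s \<tau>) w)) = (\<lambda>\<tau>. Rz w)"
        by (rule ext)
      with d1 have d2: "((\<lambda>\<tau>. Rz w) has_vector_derivative (w\<^sup>2 * (poly (G s t) w * poly (TG s t) w + poly (TG s t) w * poly (G s t) w)
            + w * (poly (F s t) w * poly (TH s t) w + poly (TF s t) w * poly (H s t) w))) (at t)" by simp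
      have "w\<^sup>2 * (poly (G s t) w * poly (TG s t) w + poly (TG s t) w * poly (G s t) w)
            + w * (poly (F s t) w * poly (TH s t) w + poly (TF s t) w * poly (H s t) w) = 0"
        using vector_derivative_unique_at[OF d2 has_vector_derivative_const] .
      then show ?thesis by (simp add: pX algebra_simps power2_eq_square)
    qed
    then have "poly (X * ([:2:] * X * G s t * TG s t + TF s t * H s t + F s t * TH s t)) = poly 0"
      by (intro ext) (simp only: poly_0)
    then have "X * ([:2:] * X * G s t * TG s t + TF s t * H s t + F s t * TH s t) = 0"
      by (simp only: poly_eq_poly_eq_iff)
    moreover have "X \<noteq> 0" by (simp add: X_def)
    ultimately show ?thesis by simp
  qed
  have cv: "[:2:] * G s t * B s + A s * H s t + F s t * C s = 0" for s
  proof -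
    have "[:2:] * G s t * B s + A s * H s t + F s t * C s
        = [:2:] * X * G s t * TG s t + TF s t * H s t + F s t * TH s t"
      by (simp add: A_def B_def C_def algebra_simps)
    then show ?thesis using Vz[of s] by simp
  qed
  have bd: "coeff (A s) j = 0 \<and> coeff (B s) j = 0 \<and> coeff (C s) j = 0" if "n + r + 1 < j" for j s
  proof -
    have t1: "degree (TF s t) \<le> n + r + 1" "degree (TG s t) \<le> n + r" "degree (TH s t) \<le> n + r + 1"
      using deg_tpoly[of FT n s t] deg_tpoly[of GT n s t] deg_tpoly[of HT n s t]
      unfolding TF_def TG_def TH_def by auto
    have m: "degree (G s t * Ft s t) \<le> n + r + 1" "degree (F s t * Gt s t) \<le> n + r + 1"
      "degree (F s t * Ht s t) \<le> n + r + 1" "degree (Ft s t * H s t) \<le> n + r + 1"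
      "degree (H s t * Gt s t) \<le> n + r + 1" "degree (G s t * Ht s t) \<le> n + r + 1"
      using deg_mult[OF dG dFt, of s t s t] deg_mult[OF dF dGt, of s t s t]
        deg_mult[OF dF dHt, of s t s t] deg_mult[OF dFt dH, of s t s t]
        deg_mult[OF dH dGt, of s t s t] deg_mult[OF dG dHt, of s t s t] by linarith+
    have "degree (A s) \<le> n + r + 1"
      unfolding A_def by (intro deg_diff t1 deg_cmult m)
    moreover have "degree (B s) \<le> n + r + 1"
      unfolding B_def X_def by (intro deg_diff deg_X t1 m)
    moreover have "degree (C s) \<le> n + r + 1"
      unfolding C_def by (intro deg_diff t1 deg_cmult m)
    ultimately show ?thesis using that by (auto intro!: coeff_eq_0)
  qed
  have ABC: "A s = 0 \<and> B s = 0 \<and> C s = 0" for s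
    by (rule topdown[where A=A and B=B and C=C and A'=A' and B'=B' and U="\<lambda>s. of_real (UX s t)"
          and G="\<lambda>s. G s t" and F="\<lambda>s. F s t" and H="\<lambda>s. H s t" and n=n and D="n+r+1",
          OF dA dB eA eB cv dGlt degF degH bd])

  have A0: "TF x t = [:2:] * (G x t * Ft x t - F x t * Gt x t)" using ABC[of x] by (simp add: A_def)
  have B0: "X * TG x t = F x t * Ht x t - Ft x t * H x t" using ABC[of x] by (simp add: B_def)
  have C0: "TH x t = [:2:] * (H x t * Gt x t - G x t * Ht x t)" using ABC[of x] by (simp add: C_def)
  have pF: "((\<lambda>\<tau>. poly (F x \<tau>) z) has_vector_derivative poly (TF x t) z) (at t)"
    by (rule cder_poly[OF ctF(1) dF])
  have pG: "((\<lambda>\<tau>. poly (G x \<tau>) z) has_vector_derivative poly (TG x t) z) (at t)"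
    by (rule cder_poly[OF ctG(1) dG])
  have pH: "((\<lambda>\<tau>. poly (H x \<tau>) z) has_vector_derivative poly (TH x t) z) (at t)"
    by (rule cder_poly[OF ctH(1) dH])
  have "z * poly (TG x t) z = poly (X * TG x t) z" by (simp add: pX)
  also have "\<dots> = poly (F x t) z * poly (Ht x t) z - poly (Ft x t) z * poly (H x t) z" by (simp add: B0)
  finally have g: "z * poly (TG x t) z = poly (F x t) z * poly (Ht x t) z - poly (Ft x t) z * poly (H x t) z" .
  show ?thesis using pF pG pH g unfolding A0 C0 by auto
qed

lemma ric1:
  fixes p F U z G H \<phi> y :: complex
  assumes "p * F + \<phi> * (- \<i> * U * F - 2 * \<i> * z * G) = - z * (\<i> * (H - F))"
    "\<phi> * F = y - z * G" "\<phi> * (y + z * G) = z * H"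
  shows "F * (\<phi>\<^sup>2 - \<i> * p - (z + U * \<phi>)) = 0"
proof -
  have ii: "\<i> * \<i> = (-1::complex)" by simp
  show ?thesis using assms ii by algebra
qed

lemma ric2:
  fixes p F U z G H \<phi> y :: complex
  assumes "p * (y + z * G) + \<phi> * z * (\<i> * (H - F)) = z * (\<i> * U * H + 2 * \<i> * z * G)"
    "\<phi> * F = y - z * G" "\<phi> * (y + z * G) = z * H"
  shows "(y + z * G) * (\<phi>\<^sup>2 - \<i> * p - (z + U * \<phi>)) = 0"
proof -
  have ii: "\<i> * \<i> = (-1::complex)" by simp
  show ?thesis using assms ii by algebra
qed

lemma tder1:
  fixes p q F U z G H \<phi> y a b c Qg :: complex
  assumes "p * F + \<phi> * (- \<i> * U * F - 2 * \<i> * z * G) = - z * (\<i> * (H - F))"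
    "q * F + \<phi> * (2 * (G * a - F * b)) = - z * Qg"
    "z * Qg = F * c - a * H"
  shows "F * (z * q - (z * a - z * c + \<i> * (\<phi> * (- \<i> * U * a - 2 * \<i> * z * b) + p * a))) = 0"
proof -
  have ii: "\<i> * \<i> = (-1::complex)" by simp
  show ?thesis using assms ii by algebra
qed

lemma tder2:
  fixes p q F U z G H \<phi> y a b c Qg :: complex
  assumes "p * (y + z * G) + \<phi> * z * (\<i> * (H - F)) = z * (\<i> * U * H + 2 * \<i> * z * G)"
    "q * (y + z * G) + \<phi> * z * Qg = z * (2 * (H * b - G * c))"
    "z * Qg = F * c - a * H"
    "\<phi> * F = y - z * G" "\<phi> * (y + z * G) = z * H"
  shows "(y + z * G) * (z * q - (z * a - z * c + \<i> * (\<phi> * (- \<i> * U * a - 2 * \<i> * z * b) + p * a))) = 0"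
proof -
  have ii: "\<i> * \<i> = (-1::complex)" by simp
  show ?thesis using assms ii by algebra
qed

theorem lemma4p1:
  fixes n r :: nat
    and u :: "real \<Rightarrow> real \<Rightarrow> real"
    and F G H Ft Gt Ht :: "real \<Rightarrow> real \<Rightarrow> complex poly"
    and E :: "nat \<Rightarrow> complex"
  assumes n_pos: "n \<ge> 1"
    and u_smooth: "smooth_UNIV (\<lambda>(x,t). u x t)"
    and sm: "smooth_poly_family F" "smooth_poly_family G" "smooth_poly_family H"
            "smooth_poly_family Ft" "smooth_poly_family Gt" "smooth_poly_family Ht"
    and degF: "\<And>x t. degree (F x t) = n \<and> lead_coeff (F x t) = 1"
    and degH: "\<And>x t. degree (H x t) = n \<and> lead_coeff (H x t) = 1"
    and degG: "\<And>x t. degree (G x t) \<le> n - 1"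
    and degFt: "\<And>x t. degree (Ft x t) = r"
    and degHt: "\<And>x t. degree (Ht x t) = r"
    and degGt: "\<And>x t. degree (Gt x t) \<le> r - 1"
    and Gt0: "r = 0 \<Longrightarrow> (\<And>x t. Gt x t = 0)"
    and eqF: "\<And>z x t. ((\<lambda>s. poly (F s t) z) has_vector_derivative
               (- \<i> * complex_of_real (deriv (\<lambda>s. u s t) x) * poly (F x t) z
                - 2 * \<i> * z * poly (G x t) z)) (at x)"
    and eqH: "\<And>z x t. ((\<lambda>s. poly (H s t) z) has_vector_derivative
               (\<i> * complex_of_real (deriv (\<lambda>s. u s t) x) * poly (H x t) z
                + 2 * \<i> * z * poly (G x t) z)) (at x)"
    and eqG: "\<And>z x t. ((\<lambda>s. poly (G s t) z) has_vector_derivative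
               (\<i> * (poly (H x t) z - poly (F x t) z))) (at x)"
    and eqFt: "\<And>z x t. ((\<lambda>s. poly (Ft s t) z) has_vector_derivative
               (- \<i> * complex_of_real (deriv (\<lambda>s. u s t) x) * poly (Ft x t) z
                - 2 * \<i> * z * poly (Gt x t) z)) (at x)"
    and eqHt: "\<And>z x t. ((\<lambda>s. poly (Ht s t) z) has_vector_derivative
               (\<i> * complex_of_real (deriv (\<lambda>s. u s t) x) * poly (Ht x t) z
                + 2 * \<i> * z * poly (Gt x t) z)) (at x)"
    and eqU: "\<And>z x t. \<exists>dGt. ((\<lambda>s. poly (Gt s t) z) has_vector_derivative dGt) (at x) \<and>
               complex_of_real (deriv (\<lambda>\<tau>. deriv (\<lambda>s. u s \<tau>) x) t)
                 = - 2 * \<i> * dGt - 2 * (poly (Ht x t) z - poly (Ft x t) z)"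
    and E0: "E 0 = 0"
    and Enz: "\<And>m. 1 \<le> m \<Longrightarrow> m \<le> 2 * n \<Longrightarrow> E m \<noteq> 0"
    and curve: "\<And>z x t. z\<^sup>2 * (poly (G x t) z)\<^sup>2 + z * poly (F x t) z * poly (H x t) z = Rpoly n E z"
  shows "\<forall>z y x t. y\<^sup>2 = Rpoly n E z \<longrightarrow>
     ((poly (F x t) z \<noteq> 0 \<or> y + z * poly (G x t) z \<noteq> 0) \<longrightarrow>
        (\<exists>phix. ((\<lambda>s. phi F G H z y s t) has_vector_derivative phix) (at x) \<and>
           (phi F G H z y x t)\<^sup>2 - \<i> * phix
             = z + complex_of_real (deriv (\<lambda>s. u s t) x) * phi F G H z y x t)) \<and>
     ((poly (F x t) z \<noteq> 0 \<or> y + z * poly (G x t) z \<noteq> 0) \<and> z \<noteq> 0 \<longrightarrow>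
        (\<exists>phit dx. ((\<lambda>\<tau>. phi F G H z y x \<tau>) has_vector_derivative phit) (at t) \<and>
           ((\<lambda>s. phi F G H z y s t * poly (Ft s t) z) has_vector_derivative dx) (at x) \<and>
           phit = poly (Ft x t) z - poly (Ht x t) z + (\<i> / z) * dx)) \<and>
     (poly (F x t) z \<noteq> 0 \<longrightarrow>
        phi F G H z y x t + phi F G H z (- y) x t = - 2 * z * poly (G x t) z / poly (F x t) z \<and>
        phi F G H z y x t * phi F G H z (- y) x t = - z * poly (H x t) z / poly (F x t) z \<and>
        phi F G H z y x t - phi F G H z (- y) x t = 2 * y / poly (F x t) z)"
proof -
  have hU: "((\<lambda>\<tau>. deriv (\<lambda>s. u s \<tau>) x) has_real_derivative deriv (\<lambda>\<tau>. deriv (\<lambda>s. u s \<tau>) x) t) (at t)" for x t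
  proof -
    obtain fx ft where h1: "\<And>x t. ((\<lambda>s. (\<lambda>(x,t). u x t) (s,t)) has_vector_derivative fx x t) (at x)"
      and h2: "\<And>x t. ((\<lambda>\<tau>. (\<lambda>(x,t). u x t) (x,\<tau>)) has_vector_derivative ft x t) (at t)"
      and h3: "\<And>x t. \<exists>m. ((\<lambda>s. ft s t) has_vector_derivative m) (at x) \<and> ((\<lambda>\<tau>. fx x \<tau>) has_vector_derivative m) (at t)"
      by (rule smooth_mixed[of "\<lambda>(x,t). u x t", OF u_smooth]) blast
    have e: "deriv (\<lambda>s. u s \<tau>) x = fx x \<tau>" for \<tau>
    proof -
      have "((\<lambda>s. u s \<tau>) has_real_derivative fx x \<tau>) (at x)"
        using h1[where x=x and t=\<tau>] by (simp add: has_real_derivative_iff_has_vector_derivative)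
      then show ?thesis by (rule DERIV_imp_deriv)
    qed
    obtain m where "((\<lambda>\<tau>. fx x \<tau>) has_vector_derivative m) (at t)" using h3 by blast
    then have d: "((\<lambda>\<tau>. deriv (\<lambda>s. u s \<tau>) x) has_real_derivative m) (at t)"
      unfolding e by (simp add: has_real_derivative_iff_has_vector_derivative)
    then have "deriv (\<lambda>\<tau>. deriv (\<lambda>s. u s \<tau>) x) t = m" by (rule DERIV_imp_deriv)
    then show ?thesis using d by simp
  qed
  note C = core[where UX="\<lambda>x t. deriv (\<lambda>s. u s t) x" and UXT="\<lambda>x t. deriv (\<lambda>\<tau>. deriv (\<lambda>s. u s \<tau>) x) t"
      and Rz="Rpoly n E", OF n_pos sm degF degH degG degFt degHt degGt hU eqF eqH eqG eqFt eqHt eqU curve]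
  show ?thesis
  proof (intro allI impI)
    fix z y x t
    assume yc: "y\<^sup>2 = Rpoly n E z"
    let ?U = "complex_of_real (deriv (\<lambda>s. u s t) x)"
    let ?\<phi> = "phi F G H z y x t"
    let ?F = "poly (F x t) z" and ?G = "poly (G x t) z" and ?H = "poly (H x t) z"
    let ?a = "poly (Ft x t) z" and ?b = "poly (Gt x t) z" and ?c = "poly (Ht x t) z"
    have cv: "\<And>s \<tau>. y\<^sup>2 = z\<^sup>2 * (poly (G s \<tau>) z)\<^sup>2 + z * poly (F s \<tau>) z * poly (H s \<tau>) z"
      using curve yc by simp
    have xpart: "\<exists>p. ((\<lambda>s. phi F G H z y s t) has_vector_derivative p) (at x)
        \<and> p * ?F + ?\<phi> * (- \<i> * ?U * ?F - 2 * \<i> * z * ?G) = - z * (\<i> * (?H - ?F))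
        \<and> p * (y + z * ?G) + ?\<phi> * z * (\<i> * (?H - ?F)) = z * (\<i> * ?U * ?H + 2 * \<i> * z * ?G)
        \<and> ?\<phi> * ?F = y - z * ?G \<and> ?\<phi> * (y + z * ?G) = z * ?H"
      if nz: "?F \<noteq> 0 \<or> y + z * ?G \<noteq> 0"
    proof -
      have pp: "\<exists>p. ((\<lambda>s. if poly (F s t) z \<noteq> 0 then (y - z * poly (G s t) z) / poly (F s t) z
                     else z * poly (H s t) z / (y + z * poly (G s t) z)) has_vector_derivative p) (at x)
         \<and> p * ?F + (if ?F \<noteq> 0 then (y - z * ?G) / ?F else z * ?H / (y + z * ?G)) * (- \<i> * ?U * ?F - 2 * \<i> * z * ?G) = - z * (\<i> * (?H - ?F))
         \<and> p * (y + z * ?G) + (if ?F \<noteq> 0 then (y - z * ?G) / ?F else z * ?H / (y + z * ?G)) * z * (\<i> * (?H - ?F)) = z * (\<i> * ?U * ?H + 2 * \<i> * z * ?G)"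
        by (rule phi_path[where fF="\<lambda>s. poly (F s t) z" and fG="\<lambda>s. poly (G s t) z" and fH="\<lambda>s. poly (H s t) z"
              and a=x and y=y and z=z, OF eqF eqG eqH cv nz])
      have vv: "?\<phi> * ?F = y - z * ?G" "?\<phi> * (y + z * ?G) = z * ?H"
        using phi_vals[OF cv[of x t] nz] unfolding phi_def by auto
      show ?thesis using pp vv unfolding phi_def by simp
    qed
    have P1: "\<exists>phix. ((\<lambda>s. phi F G H z y s t) has_vector_derivative phix) (at x) \<and>
           (phi F G H z y x t)\<^sup>2 - \<i> * phix = z + ?U * phi F G H z y x t"
      if nz: "?F \<noteq> 0 \<or> y + z * ?G \<noteq> 0"
    proof -
      obtain p where hp: "((\<lambda>s. phi F G H z y s t) has_vector_derivative p) (at x)"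
        and r1: "p * ?F + ?\<phi> * (- \<i> * ?U * ?F - 2 * \<i> * z * ?G) = - z * (\<i> * (?H - ?F))"
        and r2: "p * (y + z * ?G) + ?\<phi> * z * (\<i> * (?H - ?F)) = z * (\<i> * ?U * ?H + 2 * \<i> * z * ?G)"
        and v1: "?\<phi> * ?F = y - z * ?G" and v2: "?\<phi> * (y + z * ?G) = z * ?H"
        using xpart[OF nz] by blast
      have "?\<phi>\<^sup>2 - \<i> * p - (z + ?U * ?\<phi>) = 0"
      proof (cases "?F \<noteq> 0")
        case True then show ?thesis using ric1[OF r1 v1 v2] by simp
      next
        case False then have "y + z * ?G \<noteq> 0" using nz by simp
        then show ?thesis using ric2[OF r2 v1 v2] by simp
      qed
      then show ?thesis using hp by (intro exI[of _ p]) simp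
    qed
    show "((?F \<noteq> 0 \<or> y + z * ?G \<noteq> 0) \<longrightarrow>
        (\<exists>phix. ((\<lambda>s. phi F G H z y s t) has_vector_derivative phix) (at x) \<and>
           (phi F G H z y x t)\<^sup>2 - \<i> * phix
             = z + complex_of_real (deriv (\<lambda>s. u s t) x) * phi F G H z y x t)) \<and>
     ((?F \<noteq> 0 \<or> y + z * ?G \<noteq> 0) \<and> z \<noteq> 0 \<longrightarrow>
        (\<exists>phit dx. ((\<lambda>\<tau>. phi F G H z y x \<tau>) has_vector_derivative phit) (at t) \<and>
           ((\<lambda>s. phi F G H z y s t * poly (Ft s t) z) has_vector_derivative dx) (at x) \<and>
           phit = poly (Ft x t) z - poly (Ht x t) z + (\<i> / z) * dx)) \<and>
     (?F \<noteq> 0 \<longrightarrow>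
        phi F G H z y x t + phi F G H z (- y) x t = - 2 * z * ?G / ?F \<and>
        phi F G H z y x t * phi F G H z (- y) x t = - z * ?H / ?F \<and>
        phi F G H z y x t - phi F G H z (- y) x t = 2 * y / ?F)"
    proof (intro conjI impI)
      assume "?F \<noteq> 0 \<or> y + z * ?G \<noteq> 0"
      then show "\<exists>phix. ((\<lambda>s. phi F G H z y s t) has_vector_derivative phix) (at x) \<and>
           (phi F G H z y x t)\<^sup>2 - \<i> * phix
             = z + complex_of_real (deriv (\<lambda>s. u s t) x) * phi F G H z y x t" by (rule P1)
    next
      assume "(?F \<noteq> 0 \<or> y + z * ?G \<noteq> 0) \<and> z \<noteq> 0"
      then have nz: "?F \<noteq> 0 \<or> y + z * ?G \<noteq> 0" and z0: "z \<noteq> 0" by auto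
      show "\<exists>phit dx. ((\<lambda>\<tau>. phi F G H z y x \<tau>) has_vector_derivative phit) (at t) \<and>
           ((\<lambda>s. phi F G H z y s t * poly (Ft s t) z) has_vector_derivative dx) (at x) \<and>
           phit = poly (Ft x t) z - poly (Ht x t) z + (\<i> / z) * dx"
      proof -
        obtain p where hp: "((\<lambda>s. phi F G H z y s t) has_vector_derivative p) (at x)"
          and r1: "p * ?F + ?\<phi> * (- \<i> * ?U * ?F - 2 * \<i> * z * ?G) = - z * (\<i> * (?H - ?F))"
          and r2: "p * (y + z * ?G) + ?\<phi> * z * (\<i> * (?H - ?F)) = z * (\<i> * ?U * ?H + 2 * \<i> * z * ?G)"
          and v1: "?\<phi> * ?F = y - z * ?G" and v2: "?\<phi> * (y + z * ?G) = z * ?H"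
          using xpart[OF nz] by blast
        obtain Qg where pFt: "((\<lambda>\<tau>. poly (F x \<tau>) z) has_vector_derivative 2 * (?G * ?a - ?F * ?b)) (at t)"
          and pGt: "((\<lambda>\<tau>. poly (G x \<tau>) z) has_vector_derivative Qg) (at t)"
          and zQ: "z * Qg = ?F * ?c - ?a * ?H"
          and pHt: "((\<lambda>\<tau>. poly (H x \<tau>) z) has_vector_derivative 2 * (?H * ?b - ?G * ?c)) (at t)"
          using C[where x=x and t=t and z=z] by blast
        have tp: "\<exists>q. ((\<lambda>\<tau>. if poly (F x \<tau>) z \<noteq> 0 then (y - z * poly (G x \<tau>) z) / poly (F x \<tau>) z
                     else z * poly (H x \<tau>) z / (y + z * poly (G x \<tau>) z)) has_vector_derivative q) (at t)
         \<and> q * ?F + (if ?F \<noteq> 0 then (y - z * ?G) / ?F else z * ?H / (y + z * ?G)) * (2 * (?G * ?a - ?F * ?b)) = - z * Qg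
         \<and> q * (y + z * ?G) + (if ?F \<noteq> 0 then (y - z * ?G) / ?F else z * ?H / (y + z * ?G)) * z * Qg = z * (2 * (?H * ?b - ?G * ?c))"
          by (rule phi_path[where fF="\<lambda>\<tau>. poly (F x \<tau>) z" and fG="\<lambda>\<tau>. poly (G x \<tau>) z" and fH="\<lambda>\<tau>. poly (H x \<tau>) z"
                and a=t and y=y and z=z, OF pFt pGt pHt cv[of x] nz])
        have "\<exists>q. ((\<lambda>\<tau>. phi F G H z y x \<tau>) has_vector_derivative q) (at t)
         \<and> q * ?F + ?\<phi> * (2 * (?G * ?a - ?F * ?b)) = - z * Qg
         \<and> q * (y + z * ?G) + ?\<phi> * z * Qg = z * (2 * (?H * ?b - ?G * ?c))"
          using tp unfolding phi_def by simp
        then obtain q where hq: "((\<lambda>\<tau>. phi F G H z y x \<tau>) has_vector_derivative q) (at t)"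
          and q1: "q * ?F + ?\<phi> * (2 * (?G * ?a - ?F * ?b)) = - z * Qg"
          and q2: "q * (y + z * ?G) + ?\<phi> * z * Qg = z * (2 * (?H * ?b - ?G * ?c))" by blast
        define dx where "dx = ?\<phi> * (- \<i> * ?U * ?a - 2 * \<i> * z * ?b) + p * ?a"
        have hdx: "((\<lambda>s. phi F G H z y s t * poly (Ft s t) z) has_vector_derivative dx) (at x)"
          unfolding dx_def by (rule has_vector_derivative_mult[OF hp eqFt])
        have zq: "z * q - (z * ?a - z * ?c + \<i> * dx) = 0"
        proof (cases "?F \<noteq> 0")
          case True then show ?thesis using tder1[OF r1 q1 zQ] unfolding dx_def by simp
        next
          case False then have "y + z * ?G \<noteq> 0" using nz by simp
          then show ?thesis using tder2[OF r2 q2 zQ v1 v2] unfolding dx_def by simp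
        qed
        have "z * q = z * (?a - ?c + (\<i> / z) * dx)"
          using zq z0 by (simp add: algebra_simps)
        then have "q = ?a - ?c + (\<i> / z) * dx" using z0 by simp
        then show ?thesis using hq hdx by blast
      qed
    next
      assume F0: "?F \<noteq> 0"
      have key: "(y - z * ?G) * (- y - z * ?G) = - z * ?F * ?H"
        using cv[of x t] by (simp add: algebra_simps power2_eq_square)
      have e1: "?\<phi> = (y - z * ?G) / ?F" and e2: "phi F G H z (- y) x t = (- y - z * ?G) / ?F"
        using F0 by (simp_all add: phi_def)
      show "?\<phi> + phi F G H z (- y) x t = - 2 * z * ?G / ?F"
        unfolding e1 e2 using F0 by (simp add: field_simps)
      show "?\<phi> * phi F G H z (- y) x t = - z * ?H / ?F"
      proof -
        have "(y - z * ?G) / ?F * ((- y - z * ?G) / ?F) = ((y - z * ?G) * (- y - z * ?G)) / (?F * ?F)"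
          by simp
        also have "\<dots> = (- z * ?F * ?H) / (?F * ?F)" unfolding key ..
        also have "\<dots> = - z * ?H / ?F" using F0 by simp
        finally show ?thesis unfolding e1 e2 .
      qed
      show "?\<phi> - phi F G H z (- y) x t = 2 * y / ?F"
        unfolding e1 e2 using F0 by (simp add: field_simps)
    qed
  qed
qed

end
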